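(* Let $\mu$ be a finite positive measure on $(\Omega,\mathcal B)$ with (countably many) atoms $A_1,A_2,\dots$ arranged so that $\mu(A_n)\ge\mu(A_{n+1})$, and let $C$ be the complement of the union of the atoms. For each $n$ put $B_n=C\cup\bigcup_{j>n}A_j$. Let $Z$ be a linear subspace of $L_\infty(\mu)$ which contains $L^0_\infty(C,\mu)=\{f\in L_\infty(\mu): f=0 \text{ off } C,\ \int f\,d\mu=0\}$ and contains the function $1_{A_n}-\frac{\mu(A_n)}{\mu(B_n)}1_{B_n}$ for every $n$ with $\mu(B_n)>0$. Then the weak$^*$ closure of $Z$ in $L_\infty(\mu)$ contains $L^0_\infty=\{f\in L_\infty(\mu):\int f\,d\mu=0\}$.
   Context: An atom of $\mu$ is a set $A$ with $\mu(A)>0$ such that each measurable subset of $A$ has measure $0$ or $\mu(A)$. The weak$^*$ topology on $L_\infty(\mu)$ is $\sigma(L_\infty,L_1)$. *)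

theory Defs
  imports "HOL-Analysis.Analysis"
begin

definition is_atom :: "'a measure \<Rightarrow> 'a set \<Rightarrow> bool" where
  "is_atom M A \<longleftrightarrow> A \<in> sets M \<and> measure M A > 0 \<and>
     (\<forall>B\<in>sets M. B \<subseteq> A \<longrightarrow> measure M B = 0 \<or> measure M B = measure M A)"

definition Linf :: "'a measure \<Rightarrow> ('a \<Rightarrow> real) set" where
  "Linf M = {f \<in> borel_measurable M. \<exists>c. AE x in M. \<bar>f x\<bar> \<le> c}"

text \<open>Closure of Z in the weak* topology sigma(L_infinity, L_1): f lies in it iff every
  basic weak* neighbourhood of f meets Z.\<close>
definition weak_star_closure :: "'a measure \<Rightarrow> ('a \<Rightarrow> real) set \<Rightarrow> ('a \<Rightarrow> real) set" where
  "weak_star_closure M Z = {f \<in> Linf M. \<forall>G (e::real). finite G \<and> (\<forall>g\<in>G. integrable M g) \<and> e > 0 \<longrightarrow>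
      (\<exists>z\<in>Z. \<forall>g\<in>G. \<bar>integral\<^sup>L M (\<lambda>x. (f x - z x) * g x)\<bar> < e)}"

end

theory Submission
  imports Defs
begin


lemma atom_const:
  fixes f :: "'a \<Rightarrow> real"
  assumes fin: "finite_measure M" and at: "is_atom M A" and fi: "integrable M f"
  shows "AE x in M. x \<in> A \<longrightarrow> f x = (\<integral>x. f x * indicator A x \<partial>M) / measure M A"
proof -
  interpret finite_measure M by (rule fin)
  have As[measurable]: "A \<in> sets M" and Apos: "measure M A > 0"
    and Aat: "\<And>S. S \<in> sets M \<Longrightarrow> S \<subseteq> A \<Longrightarrow> measure M S = 0 \<or> measure M S = measure M A"
    using at unfolding is_atom_def by auto
  define c where "c = (\<integral>x. f x * indicator A x \<partial>M) / measure M A"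
  define \<phi> where "\<phi> x = f x - c" for x
  have fm[measurable]: "f \<in> borel_measurable M" using fi by auto
  have \<phi>i: "integrable M \<phi>" unfolding \<phi>_def using fi by auto
  have \<phi>0: "(\<integral>x. \<phi> x * indicator A x \<partial>M) = 0"
  proof -
    have "integrable M (indicator A :: 'a \<Rightarrow> real)"
      by (rule integrable_real_indicator) (auto simp: emeasure_eq_measure)
    have "(\<integral>x. \<phi> x * indicator A x \<partial>M) = (\<integral>x. f x * indicator A x \<partial>M) - (\<integral>x. c * indicator A x \<partial>M)"
      unfolding \<phi>_def left_diff_distrib
      using \<open>integrable M (indicator A :: 'a \<Rightarrow> real)\<close>
      by (intro Bochner_Integration.integral_diff) (auto intro!: integrable_real_mult_indicator fi)
    also have "\<dots> = 0" using Apos \<open>integrable M (indicator A :: 'a \<Rightarrow> real)\<close> by (simp add: c_def)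
    finally show ?thesis .
  qed
  have sub: "AE x in M. x \<in> A \<longrightarrow> \<psi> x = 0"
    if "integrable M \<psi>" "(\<integral>x. \<psi> x * indicator A x \<partial>M) = 0" "AE x in M. x \<in> A \<longrightarrow> \<psi> x \<ge> 0"
    for \<psi> :: "'a \<Rightarrow> real"
  proof -
    have "AE x in M. \<psi> x * indicator A x = 0"
      using integral_nonneg_eq_0_iff_AE[of M "\<lambda>x. \<psi> x * indicator A x"] that
        integrable_real_mult_indicator[OF As that(1)]
      by (auto elim!: eventually_mono simp: indicator_def)
    then show ?thesis by (auto elim!: eventually_mono simp: indicator_def)
  qed
  define P where "P = {x\<in>space M. x \<in> A \<and> \<phi> x > 0}"
  define N where "N = {x\<in>space M. x \<in> A \<and> \<phi> x < 0}"
  have [measurable]: "P \<in> sets M" "N \<in> sets M" unfolding P_def N_def \<phi>_def by measurable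
  have "P \<subseteq> A" "N \<subseteq> A" using sets.sets_into_space[OF As] unfolding P_def N_def by auto
  then have mP: "measure M P = 0 \<or> measure M P = measure M A"
    and mN: "measure M N = 0 \<or> measure M N = measure M A" using Aat by auto
  have "measure M (P \<union> N) = measure M P + measure M N"
  proof (rule finite_measure_Union)
    show "P \<inter> N = {}" by (auto simp: P_def N_def)
  qed simp_all
  moreover have "measure M (P \<union> N) \<le> measure M A"
    using \<open>P \<subseteq> A\<close> \<open>N \<subseteq> A\<close> by (intro finite_measure_mono) auto
  ultimately have "measure M P = 0 \<or> measure M N = 0" using mP mN Apos by auto
  then have "AE x in M. x \<in> A \<longrightarrow> \<phi> x = 0"
  proof
    assume "measure M P = 0"
    then have "AE x in M. x \<notin> P" by (intro AE_not_in null_setsI) (auto simp: emeasure_eq_measure)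
    then have h1: "AE x in M. x \<in> A \<longrightarrow> - \<phi> x \<ge> 0"
      using AE_space by eventually_elim (auto simp: P_def)
    have h2: "(\<integral>x. - \<phi> x * indicator A x \<partial>M) = 0" using \<phi>0 by simp
    have "AE x in M. x \<in> A \<longrightarrow> - \<phi> x = 0"
      using \<phi>i h1 h2 by (intro sub) auto
    then show ?thesis by (auto elim!: eventually_mono)
  next
    assume "measure M N = 0"
    then have "AE x in M. x \<notin> N" by (intro AE_not_in null_setsI) (auto simp: emeasure_eq_measure)
    then have h1: "AE x in M. x \<in> A \<longrightarrow> \<phi> x \<ge> 0"
      using AE_space by eventually_elim (auto simp: N_def)
    show "AE x in M. x \<in> A \<longrightarrow> \<phi> x = 0"
      using \<phi>i h1 \<phi>0 by (intro sub) auto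
  qed
  then show ?thesis by (auto elim!: eventually_mono simp: \<phi>_def c_def)
qed



theorem lemma2p1:
  fixes M :: "'a measure" and A :: "nat \<Rightarrow> 'a set" and Z :: "('a \<Rightarrow> real) set"
    and C :: "'a set" and B :: "nat \<Rightarrow> 'a set"
  assumes fin: "finite_measure M"
    and atoms: "\<And>n. is_atom M (A n) \<or> A n = {}"
    and disj: "disjoint_family A"
    and decr: "\<And>n. measure M (A n) \<ge> measure M (A (Suc n))"
    and C_def: "C = space M - (\<Union>n. A n)"
    and C_no_atom: "\<And>D. D \<subseteq> C \<Longrightarrow> \<not> is_atom M D"
    and B_def: "\<And>n. B n = C \<union> (\<Union>j\<in>{n<..}. A j)"
    and Z_sub: "Z \<subseteq> Linf M"
    and Z_zero: "(\<lambda>x. 0) \<in> Z"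
    and Z_add: "\<And>f g. f \<in> Z \<Longrightarrow> g \<in> Z \<Longrightarrow> (\<lambda>x. f x + g x) \<in> Z"
    and Z_scale: "\<And>c f. f \<in> Z \<Longrightarrow> (\<lambda>x. c * f x) \<in> Z"
    and Z_ae: "\<And>f g. f \<in> Z \<Longrightarrow> g \<in> borel_measurable M \<Longrightarrow> (AE x in M. f x = g x) \<Longrightarrow> g \<in> Z"
    and Z_L0C: "\<And>f. f \<in> Linf M \<Longrightarrow> (AE x in M. x \<notin> C \<longrightarrow> f x = 0) \<Longrightarrow>
                  integral\<^sup>L M f = 0 \<Longrightarrow> f \<in> Z"
    and Z_An: "\<And>n. measure M (B n) > 0 \<Longrightarrow>
                  (\<lambda>x. indicator (A n) x - measure M (A n) / measure M (B n) * indicator (B n) x) \<in> Z"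
  shows "{f \<in> Linf M. integral\<^sup>L M f = 0} \<subseteq> weak_star_closure M Z"
proof
  fix f assume "f \<in> {f \<in> Linf M. integral\<^sup>L M f = 0}"
  then have fL: "f \<in> Linf M" and f0: "integral\<^sup>L M f = 0" by auto
  interpret finite_measure M by (rule fin)
  from fL have fm[measurable]: "f \<in> borel_measurable M" and "\<exists>c. AE x in M. \<bar>f x\<bar> \<le> c"
    by (auto simp: Linf_def)
  then obtain K0 where K0: "AE x in M. \<bar>f x\<bar> \<le> K0" by blast
  define K where "K = max K0 0"
  have Kb: "AE x in M. \<bar>f x\<bar> \<le> K" using K0 by (auto simp: K_def elim!: eventually_mono)
  have Kpos: "K \<ge> 0" by (simp add: K_def)
  have fint: "integrable M f" by (rule integrable_const_bound[of _ K]) (use Kb in auto)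
  have Asets[measurable]: "\<And>n. A n \<in> sets M" using atoms unfolding is_atom_def by (metis sets.empty_sets)
  have Csets[measurable]: "C \<in> sets M" unfolding C_def by auto
  have Bsets[measurable]: "\<And>n. B n \<in> sets M" unfolding B_def by auto
  have Asp: "\<And>n. A n \<subseteq> space M" using sets.sets_into_space[OF Asets] by auto
  have indint: "integrable M (indicator S :: 'a \<Rightarrow> real)" if "S \<in> sets M" for S
    using that by (intro integrable_real_indicator) (auto simp: emeasure_eq_measure)
  have Adisj: "\<And>m n x. x \<in> A m \<Longrightarrow> x \<in> A n \<Longrightarrow> m = n"
    using disj unfolding disjoint_family_on_def by blast
  have AC: "\<And>n x. x \<in> A n \<Longrightarrow> x \<notin> C" unfolding C_def by auto
  have spC: "\<And>x. x \<in> space M \<Longrightarrow> x \<notin> C \<Longrightarrow> \<exists>m. x \<in> A m" unfolding C_def by auto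
  have nullAE: "AE x in M. x \<notin> S" if "S \<in> sets M" "measure M S = 0" for S
    using that by (intro AE_not_in null_setsI) (auto simp: emeasure_eq_measure)
  define I where "I S = (\<integral>x. f x * indicator S x \<partial>M)" for S
  have Iint: "integrable M (\<lambda>x. f x * indicator S x)" if "S \<in> sets M" for S
    using that fint by (rule integrable_real_mult_indicator)
  have Iadd: "I (S \<union> T) = I S + I T" if "S \<in> sets M" "T \<in> sets M" "S \<inter> T = {}" for S T
  proof -
    have "I (S \<union> T) = (\<integral>x. f x * indicator S x + f x * indicator T x \<partial>M)"
      unfolding I_def by (simp add: indicator_disj_union[OF that(3)] distrib_left)
    also have "\<dots> = I S + I T" unfolding I_def
      by (rule Bochner_Integration.integral_add) (use Iint that in auto)
    finally show ?thesis .
  qed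
  have Inull: "I S = 0" if "S \<in> sets M" "measure M S = 0" for S
  proof -
    have "I S = (\<integral>x. 0 \<partial>M)" unfolding I_def
      by (rule integral_cong_AE) (use nullAE[OF that] borel_measurable_integrable[OF Iint[OF that(1)]] in \<open>auto elim!: eventually_mono\<close>)
    then show ?thesis by simp
  qed
  have Ibound: "\<bar>I S\<bar> \<le> K * measure M S" if "S \<in> sets M" for S
  proof -
    have ae: "AE x in M. f x * indicator S x \<le> K * indicator S x \<and> - K * indicator S x \<le> f x * indicator S x"
      using Kb by eventually_elim (auto simp: indicator_def)
    have i1: "integrable M (\<lambda>x. K * indicator S x)" "integrable M (\<lambda>x. - K * indicator S x)"
      using indint[OF that] by auto
    have "I S \<le> (\<integral>x. K * indicator S x \<partial>M)" unfolding I_def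
      by (rule integral_mono_AE[OF Iint[OF that] i1(1)]) (use ae in \<open>auto elim!: eventually_mono\<close>)
    moreover have "(\<integral>x. - K * indicator S x \<partial>M) \<le> I S" unfolding I_def
      by (rule integral_mono_AE[OF i1(2) Iint[OF that]]) (use ae in \<open>auto elim!: eventually_mono\<close>)
    ultimately show ?thesis using that by auto
  qed
  have Ispace: "I (space M) = 0"
  proof -
    have "I (space M) = integral\<^sup>L M f" unfolding I_def by (rule Bochner_Integration.integral_cong) auto
    then show ?thesis using f0 by simp
  qed
  define c where "c n = I (A n) / measure M (A n)" for n
  have const: "AE x in M. x \<in> A n \<longrightarrow> f x = c n" for n
    using atoms[of n]
  proof
    assume "is_atom M (A n)"
    from atom_const[OF fin this fint] show ?thesis by (simp add: c_def I_def)
  qed simp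
  have constall: "AE x in M. \<forall>n. x \<in> A n \<longrightarrow> f x = c n"
    using const by (simp add: AE_all_countable)
  have IA: "I (A n) = c n * measure M (A n)" for n
    using Inull[OF Asets, of n] by (cases "measure M (A n) = 0") (auto simp: c_def)
  define \<beta> where "\<beta> N = I (B N) / measure M (B N)" for N
  define \<gamma> where "\<gamma> = I C / measure M C"
  have divb: "\<bar>I S / measure M S\<bar> \<le> K" if "S \<in> sets M" for S
  proof (cases "measure M S = 0")
    case False
    then have "measure M S > 0" using measure_nonneg[of M S] by linarith
    then have "\<bar>I S / measure M S\<bar> = \<bar>I S\<bar> / measure M S" by (simp add: abs_divide)
    also have "\<dots> \<le> K" using \<open>measure M S > 0\<close> Ibound[OF that] by (simp add: pos_divide_le_eq mult.commute)
    finally show ?thesis .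
  qed (simp add: Kpos)
  have \<beta>b: "\<bar>\<beta> N\<bar> \<le> K" for N
    unfolding \<beta>_def by (rule divb) simp
  have \<gamma>b: "\<bar>\<gamma>\<bar> \<le> K"
    unfolding \<gamma>_def by (rule divb) simp
  define F where "F N x = (\<Sum>n\<le>N. c n * indicator (A n) x) + \<beta> N * indicator (B N) x" for N x
  have Fm[measurable]: "F N \<in> borel_measurable M" for N unfolding F_def by measurable
  have BSuc: "B N = A (Suc N) \<union> B (Suc N)" for N
    unfolding B_def[of N] B_def[of "Suc N"] by (auto simp: Suc_le_eq) (metis Suc_lessI greaterThan_iff)
  have BSucdisj: "A (Suc N) \<inter> B (Suc N) = {}" for N
    unfolding B_def using AC Adisj by fastforce
  have spB0: "space M = A 0 \<union> B 0"
  proof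
    show "space M \<subseteq> A 0 \<union> B 0"
    proof
      fix x assume x: "x \<in> space M"
      show "x \<in> A 0 \<union> B 0"
      proof (cases "x \<in> C")
        case False
        then obtain m where "x \<in> A m" using spC x by blast
        then show ?thesis unfolding B_def by (cases m) auto
      qed (simp add: B_def)
    qed
    show "A 0 \<union> B 0 \<subseteq> space M" using Asp unfolding B_def C_def by auto
  qed
  have B0disj: "A 0 \<inter> B 0 = {}"
    unfolding B_def using AC Adisj by fastforce
  have Fsuc: "F (Suc N) x = F N x + (c (Suc N) - \<beta> N) * indicator (A (Suc N)) x
      + (\<beta> (Suc N) - \<beta> N) * indicator (B (Suc N)) x" for N x
  proof -
    have "indicator (B N) x = (indicator (A (Suc N)) x + indicator (B (Suc N)) x :: real)"
      by (subst BSuc[of N]) (rule indicator_disj_union[OF BSucdisj])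
    then show ?thesis by (simp add: F_def algebra_simps)
  qed
  have FZ: "F N \<in> Z" for N
  proof (induction N)
    case 0
    have F0: "F 0 x = c 0 * indicator (A 0) x + \<beta> 0 * indicator (B 0) x" for x by (simp add: F_def del: sum_mult_indicator)
    have IB0: "I (B 0) = - I (A 0)"
      using Iadd[OF Asets Bsets B0disj] Ispace spB0[symmetric] by simp
    show ?case
    proof (cases "measure M (B 0) > 0")
      case True
      have "F 0 = (\<lambda>x. c 0 * (indicator (A 0) x - measure M (A 0) / measure M (B 0) * indicator (B 0) x))"
      proof
        fix x
        have b0: "\<beta> 0 = - c 0 * (measure M (A 0) / measure M (B 0))"
          by (simp add: \<beta>_def IB0 IA[of 0])
        show "F 0 x = c 0 * (indicator (A 0) x - measure M (A 0) / measure M (B 0) * indicator (B 0) x)"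
        proof -
          have gen: "\<And>a b r c :: real. c*a + (-c*r)*b = c*(a - r*b)" by algebra
          show ?thesis unfolding F0 b0 by (rule gen)
        qed
      qed
      then show ?thesis using Z_scale[OF Z_An[OF True]] by simp
    next
      case False
      then have mB: "measure M (B 0) = 0" using measure_nonneg[of M "B 0"] by linarith
      then have "I (A 0) = 0" using IB0 Inull[OF Bsets mB] by simp
      then have "c 0 = 0" by (simp add: c_def)
      then have "F 0 = (\<lambda>x. 0)" by (intro ext) (simp add: F0 \<beta>_def mB)
      then show ?thesis using Z_zero by simp
    qed
  next
    case (Suc N)
    have mBN: "measure M (B N) = measure M (A (Suc N)) + measure M (B (Suc N))"
      using finite_measure_Union[OF Asets Bsets BSucdisj] by (simp add: BSuc[of N])
    have IBN: "I (B N) = I (A (Suc N)) + I (B (Suc N))"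
      using Iadd[OF Asets Bsets BSucdisj] by (simp add: BSuc[of N])
    show ?case
    proof (cases "measure M (B (Suc N)) > 0")
      case True
      have mBNpos: "measure M (B N) > 0" using mBN True measure_nonneg[of M "A (Suc N)"] by linarith
      have e1: "\<beta> N * measure M (B N) = I (B N)" using mBNpos by (simp add: \<beta>_def)
      have e2: "\<beta> (Suc N) * measure M (B (Suc N)) = I (B (Suc N))" using True by (simp add: \<beta>_def)
      have e3: "(\<beta> (Suc N) - \<beta> N) * measure M (B (Suc N)) = - (c (Suc N) - \<beta> N) * measure M (A (Suc N))"
        using e1 e2 IBN IA[of "Suc N"] mBN by (simp add: algebra_simps)
      have eq: "\<beta> (Suc N) - \<beta> N = - (c (Suc N) - \<beta> N) * (measure M (A (Suc N)) / measure M (B (Suc N)))"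
        using e3 True by (simp add: field_simps)
      have "F (Suc N) = (\<lambda>x. F N x + (c (Suc N) - \<beta> N) * (indicator (A (Suc N)) x
           - measure M (A (Suc N)) / measure M (B (Suc N)) * indicator (B (Suc N)) x))"
      proof
        fix x
        have gen: "\<And>F a b r d :: real. F + d*a + (-d*r)*b = F + d*(a - r*b)" by algebra
        show "F (Suc N) x = F N x + (c (Suc N) - \<beta> N) * (indicator (A (Suc N)) x
           - measure M (A (Suc N)) / measure M (B (Suc N)) * indicator (B (Suc N)) x)"
          unfolding Fsuc eq by (rule gen)
      qed
      then show ?thesis using Z_add[OF Suc.IH Z_scale[OF Z_An[OF True]]] by simp
    next
      case False
      then have mB: "measure M (B (Suc N)) = 0" using measure_nonneg[of M "B (Suc N)"] by linarith
      have b0: "\<beta> (Suc N) = 0" by (simp add: \<beta>_def mB)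
      have ae1: "AE x in M. x \<notin> B (Suc N)" by (rule nullAE[OF Bsets mB])
      have ae2: "AE x in M. (c (Suc N) - \<beta> N) * indicator (A (Suc N)) x = 0"
      proof (cases "measure M (A (Suc N)) = 0")
        case True
        from nullAE[OF Asets True] show ?thesis by eventually_elim simp
      next
        case False
        have "\<beta> N = c (Suc N)" using IBN Inull[OF Bsets mB] mBN mB False by (simp add: \<beta>_def c_def)
        then show ?thesis by simp
      qed
      have "AE x in M. F N x = F (Suc N) x" using ae1 ae2 by eventually_elim (simp add: Fsuc b0)
      then show ?thesis using Z_ae[OF Suc.IH Fm] by simp
    qed
  qed
  define s where "s x = indicator C x * (f x - \<gamma>)" for x
  have sm[measurable]: "s \<in> borel_measurable M" unfolding s_def by measurable
  have sZ: "s \<in> Z"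
  proof (rule Z_L0C)
    have "AE x in M. \<bar>s x\<bar> \<le> 2 * K"
      using Kb by eventually_elim (use \<gamma>b in \<open>auto simp: s_def indicator_def\<close>)
    then show "s \<in> Linf M" unfolding Linf_def using sm by blast
    show "AE x in M. x \<notin> C \<longrightarrow> s x = 0" by (simp add: s_def)
    have "integral\<^sup>L M s = (\<integral>x. f x * indicator C x - \<gamma> * indicator C x \<partial>M)"
      unfolding s_def by (rule Bochner_Integration.integral_cong) (auto simp: algebra_simps)
    also have "\<dots> = I C - (\<integral>x. \<gamma> * indicator C x \<partial>M)" unfolding I_def
      by (rule Bochner_Integration.integral_diff) (use Iint[OF Csets] indint[OF Csets] in auto)
    also have "\<dots> = I C - \<gamma> * measure M C" by simp
    also have "\<dots> = 0"
      using Inull[OF Csets] by (cases "measure M C = 0") (auto simp: \<gamma>_def)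
    finally show "integral\<^sup>L M s = 0" .
  qed
  define z where "z N x = F N x + s x" for N x
  have zZ: "z N \<in> Z" for N unfolding z_def using FZ sZ by (rule Z_add)
  have zm[measurable]: "z N \<in> borel_measurable M" for N using zZ Z_sub by (auto simp: Linf_def)
  have indB: "(\<lambda>N. indicator (B N) x :: real) \<longlonglongrightarrow> indicator C x" for x
  proof (rule tendsto_eventually)
    show "\<forall>\<^sub>F N in sequentially. indicator (B N) x = (indicator C x :: real)"
    proof (cases "x \<in> C")
      case True then show ?thesis by (simp add: B_def)
    next
      case notC: False
      show ?thesis
      proof (cases "\<exists>m. x \<in> A m")
        case True then obtain m where m: "x \<in> A m" by blast
        have "x \<notin> B N" if "N \<ge> m" for N
        proof
          assume "x \<in> B N"
          then obtain j where "j > N" "x \<in> A j" using notC by (auto simp: B_def)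
          then show False using Adisj[OF m, of j] that by auto
        qed
        then show ?thesis using notC unfolding eventually_sequentially by (intro exI[of _ m]) auto
      next
        case False then show ?thesis using notC by (simp add: B_def)
      qed
    qed
  qed
  have Fpt_A: "F N x = (if m \<le> N then c m else \<beta> N)" if m: "x \<in> A m" for N m x
  proof -
    have "(\<Sum>n\<le>N. c n * indicator (A n) x) = (\<Sum>n\<le>N. if n = m then c m else 0)"
      by (rule sum.cong) (use m in \<open>auto simp: indicator_def dest: Adisj[OF m]\<close>)
    also have "\<dots> = (if m \<le> N then c m else 0)" by simp
    finally have s1: "(\<Sum>n\<le>N. c n * indicator (A n) x) = (if m \<le> N then c m else 0)" .
    have "x \<in> B N \<longleftrightarrow> N < m"
    proof
      assume "x \<in> B N"
      then obtain j where "j > N" "x \<in> A j" using AC[OF m] by (auto simp: B_def)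
      then show "N < m" using Adisj[OF m, of j] by auto
    next
      assume "N < m" then show "x \<in> B N" using m by (auto simp: B_def)
    qed
    then have s2: "indicator (B N) x = (if m \<le> N then 0 else (1::real))" by (auto simp: indicator_def)
    show ?thesis unfolding F_def s1 s2 by simp
  qed
  have Fpt_C: "F N x = \<beta> N" if "x \<in> C" for N x
  proof -
    have "(\<Sum>n\<le>N. c n * indicator (A n) x) = 0"
      using AC that by (intro sum.neutral) (auto simp: indicator_def)
    moreover have "x \<in> B N" using that by (simp add: B_def)
    ultimately show ?thesis by (simp add: F_def del: sum_mult_indicator)
  qed
  have \<beta>conv: "\<beta> \<longlonglongrightarrow> \<gamma>" if Cpos: "measure M C > 0"
  proof -
    have IBc: "(\<lambda>N. I (B N)) \<longlonglongrightarrow> I C" unfolding I_def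
    proof (rule integral_dominated_convergence[where w="\<lambda>x. K"])
      show "AE x in M. (\<lambda>N. f x * indicator (B N) x) \<longlonglongrightarrow> f x * indicator C x"
        by (intro AE_I2 tendsto_mult tendsto_const indB)
      show "AE x in M. norm (f x * indicator (B N) x) \<le> K" for N
        using Kb by eventually_elim (auto simp: indicator_def Kpos)
    qed auto
    have mBc: "(\<lambda>N. \<integral>x. indicator (B N) x \<partial>M) \<longlonglongrightarrow> (\<integral>x. indicator C x \<partial>M :: real)"
    proof (rule integral_dominated_convergence[where w="\<lambda>x. 1"])
      show "AE x in M. (\<lambda>N. indicator (B N) x :: real) \<longlonglongrightarrow> indicator C x"
        by (intro AE_I2 indB)
      show "AE x in M. norm (indicator (B N) x :: real) \<le> 1" for N
        by (auto simp: indicator_def)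
    qed auto
    then have mBc': "(\<lambda>N. measure M (B N)) \<longlonglongrightarrow> measure M C"
      using Bsets Csets sets.Int_space_eq2 by simp
    show ?thesis unfolding \<beta>_def \<gamma>_def using tendsto_divide[OF IBc mBc'] Cpos by simp
  qed
  have Cae: "AE x in M. x \<in> C \<longrightarrow> \<beta> \<longlonglongrightarrow> \<gamma>"
  proof (cases "measure M C > 0")
    case True then show ?thesis using \<beta>conv by simp
  next
    case False
    then have "measure M C = 0" using measure_nonneg[of M C] by linarith
    from nullAE[OF Csets this] show ?thesis by eventually_elim simp
  qed
  have conv: "(\<lambda>N. \<integral>x. (f x - z N x) * g x \<partial>M) \<longlonglongrightarrow> 0" if gi: "integrable M g" for g
  proof -
    have gm[measurable]: "g \<in> borel_measurable M" using gi by auto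
    have pw: "AE x in M. (\<lambda>N. (f x - z N x) * g x) \<longlonglongrightarrow> 0"
      using constall Cae AE_space
    proof eventually_elim
      fix x assume x: "\<forall>n. x \<in> A n \<longrightarrow> f x = c n" "x \<in> C \<longrightarrow> \<beta> \<longlonglongrightarrow> \<gamma>" "x \<in> space M"
      show "(\<lambda>N. (f x - z N x) * g x) \<longlonglongrightarrow> 0"
      proof (cases "x \<in> C")
        case True
        then have "(\<lambda>N. (f x - z N x) * g x) = (\<lambda>N. (\<gamma> - \<beta> N) * g x)"
          by (auto simp: z_def Fpt_C s_def)
        moreover have "(\<lambda>N. (\<gamma> - \<beta> N) * g x) \<longlonglongrightarrow> (\<gamma> - \<gamma>) * g x"
          using x True by (intro tendsto_intros) auto
        ultimately show ?thesis by simp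
      next
        case False
        then obtain m where m: "x \<in> A m" using spC x by blast
        show ?thesis
        proof (rule tendsto_eventually)
          show "\<forall>\<^sub>F N in sequentially. (f x - z N x) * g x = 0"
            unfolding eventually_sequentially
            using m x False by (intro exI[of _ m]) (auto simp: z_def Fpt_A[OF m] s_def)
        qed
      qed
    qed
    have bd: "AE x in M. norm ((f x - z N x) * g x) \<le> 2 * K * norm (g x)" for N
      using constall Kb AE_space
    proof eventually_elim
      fix x assume x: "\<forall>n. x \<in> A n \<longrightarrow> f x = c n" "\<bar>f x\<bar> \<le> K" "x \<in> space M"
      have "\<bar>f x - z N x\<bar> \<le> 2 * K"
      proof (cases "x \<in> C")
        case True
        then have "f x - z N x = \<gamma> - \<beta> N" by (auto simp: z_def Fpt_C s_def)
        then show ?thesis using \<gamma>b \<beta>b[of N] by auto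
      next
        case False
        then obtain m where m: "x \<in> A m" using spC x by blast
        show ?thesis
        proof (cases "m \<le> N")
          case True
          then have "f x - z N x = 0" using m x False by (auto simp: z_def Fpt_A[OF m] s_def)
          then show ?thesis using Kpos by simp
        next
          case False
          then have "f x - z N x = f x - \<beta> N" using m AC[OF m] by (auto simp: z_def Fpt_A[OF m] s_def)
          then show ?thesis using x \<beta>b[of N] by auto
        qed
      qed
      then show "norm ((f x - z N x) * g x) \<le> 2 * K * norm (g x)"
        by (simp add: abs_mult mult_right_mono)
    qed
    have "(\<lambda>N. \<integral>x. (f x - z N x) * g x \<partial>M) \<longlonglongrightarrow> (\<integral>x. 0 \<partial>M)"
      by (rule integral_dominated_convergence[OF _ _ _ pw bd]) (use gi in auto)
    then show ?thesis by simp
  qed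
  show "f \<in> weak_star_closure M Z"
    unfolding weak_star_closure_def
  proof (intro CollectI conjI allI impI fL)
    fix G :: "('a \<Rightarrow> real) set" and e :: real
    assume H: "finite G \<and> (\<forall>g\<in>G. integrable M g) \<and> 0 < e"
    have "\<forall>g\<in>G. \<forall>\<^sub>F N in sequentially. \<bar>\<integral>x. (f x - z N x) * g x \<partial>M\<bar> < e"
    proof
      fix g assume "g \<in> G"
      then have "(\<lambda>N. \<integral>x. (f x - z N x) * g x \<partial>M) \<longlonglongrightarrow> 0" using H conv by auto
      from order_tendstoD(2)[OF tendsto_rabs[OF this], of e] H
      show "\<forall>\<^sub>F N in sequentially. \<bar>\<integral>x. (f x - z N x) * g x \<partial>M\<bar> < e" by simp
    qed
    then have "\<forall>\<^sub>F N in sequentially. \<forall>g\<in>G. \<bar>\<integral>x. (f x - z N x) * g x \<partial>M\<bar> < e"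
      using H by (simp add: eventually_ball_finite_distrib)
    then obtain N0 where "\<forall>N\<ge>N0. \<forall>g\<in>G. \<bar>\<integral>x. (f x - z N x) * g x \<partial>M\<bar> < e"
      unfolding eventually_sequentially by blast
    then have "\<forall>g\<in>G. \<bar>\<integral>x. (f x - z N0 x) * g x \<partial>M\<bar> < e" by simp
    then show "\<exists>z\<in>Z. \<forall>g\<in>G. \<bar>\<integral>x. (f x - z x) * g x \<partial>M\<bar> < e" using zZ[of N0] by blast
  qed
qed

end
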